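(* Consider a Bayesian model with parameter $\theta$, prior $P(\theta)$, and data $\mathcal{D}=(\mathcal{D}_i)_{i=1}^n$ whose elements are conditionally independent given $\theta$ with likelihoods $P(\mathcal{D}_i\mid\theta)$. For each $i$, let $\theta^i_1,\dots,\theta^i_k$ be i.i.d. samples from the posterior $P(\theta\mid\mathcal{D}_{<i})$, and define $$\hat{\mathcal{L}}(\mathcal{D})=\sum_{i=1}^n\frac1k\sum_{j=1}^k\log P(\mathcal{D}_i\mid\theta^i_j),\qquad \hat{\mathcal{L}}_k(\mathcal{D})=\sum_{i=1}^n\log\frac1k\sum_{j=1}^kP(\mathcal{D}_i\mid\theta^i_j).$$ Let $\mathcal{L}(\mathcal{D})=\sum_{i=1}^n\mathbb{E}_{\theta\sim P(\theta\mid\mathcal{D}_{<i})}[\log P(\mathcal{D}_i\mid\theta)]$ and $\mathcal{L}_k(\mathcal{D})=\mathbb{E}[\hat{\mathcal{L}}_k(\mathcal{D})]$. Then $$\mathbb{E}[\hat{\mathcal{L}}(\mathcal{D})]=\mathcal{L}(\mathcal{D})\le\log P(\mathcal{D})\quad\text{and}\quad\mathbb{E}[\hat{\mathcal{L}}_k(\mathcal{D})]=\mathcal{L}_k(\mathcal{D})\le\log P(\mathcal{D}).$$ Further, $$\mathcal{L}(\mathcal{D})=\log P(\mathcal{D})-\sum_{i=1}^n\mathrm{KL}\big(P(\theta\mid\mathcal{D}_{<i})\,\|\,P(\theta\mid\mathcal{D}_{<i+1})\big).$$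
   Context: $\mathcal{D}_{<i}=(\mathcal{D}_j)_{j=1}^{i-1}$ with $\mathcal{D}_{<1}=\emptyset$. $P(\mathcal{D})=\int P(\mathcal{D}\mid\theta)P(\theta)d\theta$ is the marginal likelihood, so that $\log P(\mathcal{D})=\sum_i\log P(\mathcal{D}_i\mid\mathcal{D}_{<i})$ with $P(\mathcal{D}_i\mid\mathcal{D}_{<i})=\mathbb{E}_{\theta\sim P(\theta\mid\mathcal{D}_{<i})}P(\mathcal{D}_i\mid\theta)$. $\mathrm{KL}$ is the Kullback–Leibler divergence. *)

theory Defs
  imports "HOL-Probability.Probability"
begin

text \<open>Bayesian model: prior measure M on the parameter space, likelihood
  functions lik i (theta) = P(D_i | theta), data indexed 0-based i < n.
  D_{<i} = (D_j)_{j<i}.\<close>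

definition marg :: "'a measure \<Rightarrow> (nat \<Rightarrow> 'a \<Rightarrow> real) \<Rightarrow> nat \<Rightarrow> real" where
  "marg M lik i = (\<integral>\<theta>. (\<Prod>j<i. lik j \<theta>) \<partial>M)"

definition post :: "'a measure \<Rightarrow> (nat \<Rightarrow> 'a \<Rightarrow> real) \<Rightarrow> nat \<Rightarrow> 'a measure" where
  "post M lik i = density M (\<lambda>\<theta>. ennreal ((\<Prod>j<i. lik j \<theta>) / marg M lik i))"

text \<open>Natural-log KL divergence KL(P || Q) = E_P[ln dP/dQ].\<close>
definition KL :: "'a measure \<Rightarrow> 'a measure \<Rightarrow> real" where
  "KL P Q = KL_divergence (exp 1) Q P"

definition samples :: "'a measure \<Rightarrow> (nat \<Rightarrow> 'a \<Rightarrow> real) \<Rightarrow> nat \<Rightarrow> nat \<Rightarrow> (nat \<times> nat \<Rightarrow> 'a) measure" where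
  "samples M lik n k = PiM ({..<n} \<times> {..<k}) (\<lambda>(i,j). post M lik i)"

definition Lhat :: "(nat \<Rightarrow> 'a \<Rightarrow> real) \<Rightarrow> nat \<Rightarrow> nat \<Rightarrow> (nat \<times> nat \<Rightarrow> 'a) \<Rightarrow> real" where
  "Lhat lik n k \<omega> = (\<Sum>i<n. (1 / real k) * (\<Sum>j<k. ln (lik i (\<omega> (i,j)))))"

definition Lhat_k :: "(nat \<Rightarrow> 'a \<Rightarrow> real) \<Rightarrow> nat \<Rightarrow> nat \<Rightarrow> (nat \<times> nat \<Rightarrow> 'a) \<Rightarrow> real" where
  "Lhat_k lik n k \<omega> = (\<Sum>i<n. ln ((1 / real k) * (\<Sum>j<k. lik i (\<omega> (i,j)))))"

definition L :: "'a measure \<Rightarrow> (nat \<Rightarrow> 'a \<Rightarrow> real) \<Rightarrow> nat \<Rightarrow> real" where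
  "L M lik n = (\<Sum>i<n. \<integral>\<theta>. ln (lik i \<theta>) \<partial>(post M lik i))"

definition L_k :: "'a measure \<Rightarrow> (nat \<Rightarrow> 'a \<Rightarrow> real) \<Rightarrow> nat \<Rightarrow> nat \<Rightarrow> real" where
  "L_k M lik n k = (\<integral>\<omega>. Lhat_k lik n k \<omega> \<partial>(samples M lik n k))"

end

theory Submission
  imports Defs
begin

lemma ln_le_aux: fixes x c :: real assumes "0 < x" "0 < c"
  shows "ln x \<le> ln c + x / c - 1"
proof -
  have "ln (x / c) \<le> x / c - 1" using assms by (intro ln_le_minus_one) simp
  then show ?thesis using assms by (simp add: ln_div)
qed

lemma comp_int:
  assumes N: "\<And>x. x \<in> I \<Longrightarrow> prob_space (N x)" and x: "x \<in> I"
    and f: "(f :: _ \<Rightarrow> real) \<in> borel_measurable (N x)"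
  shows "integrable (PiM I N) (\<lambda>\<omega>. f (\<omega> x)) \<longleftrightarrow> integrable (N x) f"
    and "(\<integral>\<omega>. f (\<omega> x) \<partial>PiM I N) = integral\<^sup>L (N x) f"
proof -
  have d: "distr (PiM I N) (N x) (\<lambda>\<omega>. \<omega> x) = N x"
    using distr_PiM_component[of I N x] N x by simp
  have m: "(\<lambda>\<omega>. \<omega> x) \<in> measurable (PiM I N) (N x)"
    using x by (rule measurable_component_singleton)
  show "integrable (PiM I N) (\<lambda>\<omega>. f (\<omega> x)) \<longleftrightarrow> integrable (N x) f"
    using integrable_distr_eq[OF m f] d by simp
  show "(\<integral>\<omega>. f (\<omega> x) \<partial>PiM I N) = integral\<^sup>L (N x) f"
    using integral_distr[OF m f] d by simp
qed

theorem proposition4p1: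
  fixes M :: "'a measure" and lik :: "nat \<Rightarrow> 'a \<Rightarrow> real" and n k :: nat
  assumes "prob_space M"
    and "k \<ge> 1"
    and "\<And>i. i < n \<Longrightarrow> lik i \<in> borel_measurable M"
    and "\<And>i \<theta>. i < n \<Longrightarrow> \<theta> \<in> space M \<Longrightarrow> lik i \<theta> > 0"
    and "\<And>i. i \<le> n \<Longrightarrow> integrable M (\<lambda>\<theta>. \<Prod>j<i. lik j \<theta>)"
    and "\<And>i. i < n \<Longrightarrow> integrable (post M lik i) (\<lambda>\<theta>. ln (lik i \<theta>))"
  shows "(\<integral>\<omega>. Lhat lik n k \<omega> \<partial>(samples M lik n k)) = L M lik n
       \<and> L M lik n \<le> ln (marg M lik n)
       \<and> (\<integral>\<omega>. Lhat_k lik n k \<omega> \<partial>(samples M lik n k)) = L_k M lik n k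
       \<and> L_k M lik n k \<le> ln (marg M lik n)
       \<and> L M lik n = ln (marg M lik n) - (\<Sum>i<n. KL (post M lik i) (post M lik (Suc i)))"
proof -
  interpret P: prob_space M by fact
  define p where "p i \<theta> = (\<Prod>j<i. lik j \<theta>)" for i \<theta>
  define m where "m i = marg M lik i" for i
  have m_def': "m i = (\<integral>\<theta>. p i \<theta> \<partial>M)" for i unfolding m_def p_def marg_def ..
  have p_meas: "p i \<in> borel_measurable M" if "i \<le> n" for i
    unfolding p_def using that assms(3) by (intro borel_measurable_prod) auto
  have p_pos: "p i \<theta> > 0" if "i \<le> n" "\<theta> \<in> space M" for i \<theta>
    unfolding p_def using that assms(4) by (intro prod_pos) auto
  have p_int: "integrable M (p i)" if "i \<le> n" for i
    unfolding p_def using assms(5) that by simp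
  have p_Suc: "p (Suc i) \<theta> = p i \<theta> * lik i \<theta>" for i \<theta>
    unfolding p_def by simp
  have m_pos: "m i > 0" if "i \<le> n" for i
  proof -
    have "0 \<le> m i" unfolding m_def' using p_pos that
      by (intro integral_nonneg_AE) (auto intro!: AE_I2 less_imp_le)
    moreover have "m i \<noteq> 0"
    proof
      assume "m i = 0"
      then have "AE \<theta> in M. p i \<theta> = 0" unfolding m_def'
        using p_int[OF that] p_pos[OF that]
        by (subst (asm) integral_nonneg_eq_0_iff_AE) (auto intro!: AE_I2 less_imp_le)
      moreover have "AE \<theta> in M. 0 < p i \<theta>" using p_pos[OF that] by (auto intro!: AE_I2)
      ultimately have "AE \<theta> in M. False" by eventually_elim simp
      then show False by simp
    qed
    ultimately show ?thesis by simp
  qed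
  have m0: "m 0 = 1" unfolding m_def' p_def by (simp add: P.prob_space)
  define c where "c i = m (Suc i) / m i" for i
  have c_pos: "c i > 0" if "i < n" for i unfolding c_def using m_pos that by simp
  have tele: "(\<Sum>i<n. ln (c i)) = ln (m n)"
  proof -
    have "(\<Sum>i<n. ln (c i)) = (\<Sum>i<n. ln (m (Suc i)) - ln (m i))"
    proof (intro sum.cong refl)
      fix i assume "i \<in> {..<n}"
      then have "0 < m (Suc i)" "0 < m i" using m_pos by auto
      then show "ln (c i) = ln (m (Suc i)) - ln (m i)" by (simp add: c_def ln_div)
    qed
    also have "\<dots> = ln (m n) - ln (m 0)" by (rule sum_lessThan_telescope)
    finally show ?thesis by (simp add: m0)
  qed
  define g where "g i \<theta> = p i \<theta> / m i" for i \<theta>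
  have post_eq: "post M lik i = density M (\<lambda>\<theta>. ennreal (g i \<theta>))" for i
    unfolding post_def g_def p_def m_def marg_def ..
  have g_meas: "g i \<in> borel_measurable M" if "i \<le> n" for i
    unfolding g_def using p_meas[OF that] by measurable
  have g_nn: "AE \<theta> in M. 0 \<le> g i \<theta>" if "i \<le> n" for i
    unfolding g_def using p_pos[OF that] m_pos[OF that]
    by (auto intro!: AE_I2 less_imp_le)
  have g_int: "integrable M (g i)" if "i \<le> n" for i
    unfolding g_def using p_int[OF that] by simp
  have g_one: "integral\<^sup>L M (g i) = 1" if "i \<le> n" for i
    unfolding g_def using m_pos[OF that] by (simp add: m_def')
  have space_post: "space (post M lik i) = space M" for i
    unfolding post_eq by simp
  have sets_post: "sets (post M lik i) = sets M" for i
    unfolding post_eq by simp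
  have meas_post: "f \<in> borel_measurable (post M lik i) \<longleftrightarrow> f \<in> borel_measurable M" for i and f :: "'a \<Rightarrow> real"
  proof -
    have "(post M lik i \<rightarrow>\<^sub>M (borel :: real measure)) = (M \<rightarrow>\<^sub>M borel)"
      by (rule measurable_cong_sets[OF sets_post refl])
    then show ?thesis by (rule arg_cong)
  qed
  have post_prob: "prob_space (post M lik i)" if "i \<le> n" for i
  proof (rule prob_spaceI)
    have "emeasure (post M lik i) (space (post M lik i)) = (\<integral>\<^sup>+\<theta>. ennreal (g i \<theta>) \<partial>M)"
      unfolding post_eq using g_meas[OF that]
      by (simp add: emeasure_density)
    also have "\<dots> = ennreal (integral\<^sup>L M (g i))"
      using g_int[OF that] g_nn[OF that] by (rule nn_integral_eq_integral)
    finally show "emeasure (post M lik i) (space (post M lik i)) = 1"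
      using g_one[OF that] by simp
  qed
  have int_post: "integrable (post M lik i) f \<longleftrightarrow> integrable M (\<lambda>\<theta>. g i \<theta> * f \<theta>)"
    and integral_post: "integral\<^sup>L (post M lik i) f = (\<integral>\<theta>. g i \<theta> * f \<theta> \<partial>M)"
    if "i \<le> n" "f \<in> borel_measurable M" for i f
    using integrable_density[OF that(2) g_meas[OF that(1)] g_nn[OF that(1)]]
      integral_density[OF that(2) g_meas[OF that(1)] g_nn[OF that(1)]]
    unfolding post_eq by simp_all
  have glik: "g i \<theta> * lik i \<theta> = p (Suc i) \<theta> / m i" for i \<theta>
    unfolding g_def p_Suc by simp
  have lik_int: "integrable (post M lik i) (lik i)" if "i < n" for i
    using that by (subst int_post) (auto simp: glik intro!: p_int assms(3))
  have lik_E: "integral\<^sup>L (post M lik i) (lik i) = c i" if "i < n" for i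
    using that by (subst integral_post) (auto simp: glik c_def m_def' intro!: assms(3))
  have ln_meas: "(\<lambda>\<theta>. ln (lik i \<theta>)) \<in> borel_measurable M" if "i < n" for i
    using assms(3)[OF that] by measurable
  have Eln: "integral\<^sup>L (post M lik i) (\<lambda>\<theta>. ln (lik i \<theta>)) \<le> ln (c i)" if "i < n" for i
  proof -
    interpret Q: prob_space "post M lik i" using post_prob that by simp
    have "integral\<^sup>L (post M lik i) (\<lambda>\<theta>. ln (lik i \<theta>))
        \<le> integral\<^sup>L (post M lik i) (\<lambda>\<theta>. ln (c i) + lik i \<theta> / c i - 1)"
      using assms(6)[OF that] lik_int[OF that] assms(4)[OF that] c_pos[OF that]
      by (intro integral_mono) (auto simp: space_post intro!: ln_le_aux)
    also have "\<dots> = ln (c i)"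
      using lik_int[OF that] lik_E[OF that] c_pos[OF that] Q.prob_space
      by (simp add: lebesgue_integral_const)
    finally show ?thesis .
  qed

  define I where "I = {..<n} \<times> {..<k}"
  define N where "N = (\<lambda>(i::nat,j::nat). post M lik i)"
  have S_eq: "samples M lik n k = PiM I N" unfolding samples_def I_def N_def ..
  have N_ij: "N (i,j) = post M lik i" for i j unfolding N_def by simp
  have N_prob: "\<And>x. x \<in> I \<Longrightarrow> prob_space (N x)" unfolding I_def N_def using post_prob by auto
  interpret S: prob_space "PiM I N" by (rule prob_space_PiM) (rule N_prob)
  have comp: "integrable (PiM I N) (\<lambda>\<omega>. f (\<omega> (i,j)))"
     "(\<integral>\<omega>. f (\<omega> (i,j)) \<partial>PiM I N) = integral\<^sup>L (post M lik i) f"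
     if "i<n" "j<k" "f \<in> borel_measurable M" "integrable (post M lik i) f" for i j and f :: "'a \<Rightarrow> real"
     using comp_int[OF N_prob, where x="(i,j)" and f=f] that meas_post by (auto simp: I_def N_ij)
  have compm: "(\<lambda>\<omega>. f (\<omega> (i,j))) \<in> borel_measurable (PiM I N)"
    if "i<n" "j<k" "f \<in> borel_measurable M" for i j and f :: "'a \<Rightarrow> real"
  proof -
    have "(\<lambda>\<omega>. \<omega> (i,j)) \<in> measurable (PiM I N) (N (i,j))" using that
      by (intro measurable_component_singleton) (auto simp: I_def)
    moreover have "f \<in> borel_measurable (N (i,j))" using that meas_post N_ij by simp
    ultimately show ?thesis by (rule measurable_compose)
  qed
  have kpos: "real k > 0" using assms(2) by simp
  have int_ij: "integrable (PiM I N) (\<lambda>\<omega>. ln (lik i (\<omega> (i,j))))" if "i<n" "j<k" for i j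
    using comp(1)[OF that(1) that(2) ln_meas[OF that(1)] assms(6)[OF that(1)]] .
  have E_ij: "(\<integral>\<omega>. ln (lik i (\<omega> (i,j))) \<partial>PiM I N) = integral\<^sup>L (post M lik i) (\<lambda>\<theta>. ln (lik i \<theta>))"
    if "i<n" "j<k" for i j
    using comp(2)[OF that(1) that(2) ln_meas[OF that(1)] assms(6)[OF that(1)]] .
  have lint_ij: "integrable (PiM I N) (\<lambda>\<omega>. lik i (\<omega> (i,j)))" if "i<n" "j<k" for i j
    using comp(1)[OF that(1) that(2) assms(3)[OF that(1)] lik_int[OF that(1)]] .
  have lE_ij: "(\<integral>\<omega>. lik i (\<omega> (i,j)) \<partial>PiM I N) = c i"
    if "i<n" "j<k" for i j
    using comp(2)[OF that(1) that(2) assms(3)[OF that(1)] lik_int[OF that(1)]] lik_E[OF that(1)] by simp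

  have part1: "(\<integral>\<omega>. Lhat lik n k \<omega> \<partial>samples M lik n k) = L M lik n"
  proof -
    have "(\<integral>\<omega>. Lhat lik n k \<omega> \<partial>PiM I N)
        = (\<Sum>i<n. \<integral>\<omega>. (1/real k) * (\<Sum>j<k. ln (lik i (\<omega> (i,j)))) \<partial>PiM I N)"
      unfolding Lhat_def by (intro Bochner_Integration.integral_sum integrable_mult_right Bochner_Integration.integrable_sum) (auto intro: int_ij)
    also have "\<dots> = (\<Sum>i<n. (1/real k) * (\<Sum>j<k. \<integral>\<omega>. ln (lik i (\<omega> (i,j))) \<partial>PiM I N))"
      using int_ij
      by (intro sum.cong refl) (subst integral_mult_right_zero, subst Bochner_Integration.integral_sum, auto)
    also have "\<dots> = (\<Sum>i<n. integral\<^sup>L (post M lik i) (\<lambda>\<theta>. ln (lik i \<theta>)))"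
    proof (intro sum.cong refl)
      fix i assume "i \<in> {..<n}"
      then have "(\<Sum>j<k. \<integral>\<omega>. ln (lik i (\<omega> (i,j))) \<partial>PiM I N)
          = real k * integral\<^sup>L (post M lik i) (\<lambda>\<theta>. ln (lik i \<theta>))" using E_ij by simp
      then show "(1/real k) * (\<Sum>j<k. \<integral>\<omega>. ln (lik i (\<omega> (i,j))) \<partial>PiM I N)
          = integral\<^sup>L (post M lik i) (\<lambda>\<theta>. ln (lik i \<theta>))" using kpos by simp
    qed
    finally show ?thesis unfolding S_eq L_def .
  qed
  have part2: "L M lik n \<le> ln (marg M lik n)"
  proof -
    have "L M lik n \<le> (\<Sum>i<n. ln (c i))" unfolding L_def using Eln by (intro sum_mono) auto
    then show ?thesis using tele by (simp add: m_def)
  qed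
  have part3: "(\<integral>\<omega>. Lhat_k lik n k \<omega> \<partial>(samples M lik n k)) = L_k M lik n k"
    unfolding L_k_def ..

  define A where "A i \<omega> = (1 / real k) * (\<Sum>j<k. lik i (\<omega> (i,j)))" for i \<omega>
  have sp: "\<omega> (i,j) \<in> space M" if "\<omega> \<in> space (PiM I N)" "i<n" "j<k" for \<omega> i j
    using that by (auto simp: space_PiM I_def PiE_iff N_ij space_post)
  have A_low: "A i \<omega> \<ge> (1 / real k) * lik i (\<omega> (i,0))" if "\<omega> \<in> space (PiM I N)" "i<n" for \<omega> i
  proof -
    have "lik i (\<omega> (i,0)) \<le> (\<Sum>j<k. lik i (\<omega> (i,j)))"
      using that assms(2) sp[OF that] assms(4)[OF that(2)]
      by (intro member_le_sum[of 0 "{..<k}" "\<lambda>j. lik i (\<omega> (i,j))", simplified])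
         (auto intro: less_imp_le)
    then show ?thesis unfolding A_def using kpos by (simp add: divide_right_mono)
  qed
  have lik0: "lik i (\<omega> (i,0)) > 0" if "\<omega> \<in> space (PiM I N)" "i<n" for \<omega> i
    using assms(4)[OF that(2) sp[OF that]] assms(2) by simp
  have A_pos: "A i \<omega> > 0" if "\<omega> \<in> space (PiM I N)" "i<n" for \<omega> i
  proof -
    have "0 < (1 / real k) * lik i (\<omega> (i,0))" using lik0[OF that] kpos by simp
    then show ?thesis using A_low[OF that] by linarith
  qed
  have A_int: "integrable (PiM I N) (A i)" if "i<n" for i
    unfolding A_def using that by (intro integrable_mult_right Bochner_Integration.integrable_sum) (auto intro: lint_ij)
  have A_E: "integral\<^sup>L (PiM I N) (A i) = c i" if "i<n" for i
  proof -
    have "integral\<^sup>L (PiM I N) (A i) = (1/real k) * (\<Sum>j<k. \<integral>\<omega>. lik i (\<omega> (i,j)) \<partial>PiM I N)"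
      unfolding A_def using that
      by (subst integral_mult_right_zero, subst Bochner_Integration.integral_sum) (auto intro: lint_ij)
    also have "\<dots> = c i" using that lE_ij kpos by simp
    finally show ?thesis .
  qed
  have A_meas: "A i \<in> borel_measurable (PiM I N)" if "i<n" for i
    using A_int[OF that] by (rule borel_measurable_integrable)
  have lnA_meas: "(\<lambda>\<omega>. ln (A i \<omega>)) \<in> borel_measurable (PiM I N)" if "i<n" for i
    using A_meas[OF that] by measurable
  define U where "U i \<omega> = ln (c i) + A i \<omega> / c i - 1" for i \<omega>
  define Lo where "Lo i \<omega> = ln (lik i (\<omega> (i,0::nat))) - ln (real k)" for i \<omega>
  have U_int: "integrable (PiM I N) (U i)" if "i<n" for i
    unfolding U_def using A_int[OF that] by simp
  have Lo_int: "integrable (PiM I N) (Lo i)" if "i<n" for i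
    unfolding Lo_def using int_ij[OF that, of 0] assms(2) by simp
  have upper: "ln (A i \<omega>) \<le> U i \<omega>" if "\<omega> \<in> space (PiM I N)" "i<n" for \<omega> i
    unfolding U_def using A_pos[OF that] c_pos[OF that(2)] by (rule ln_le_aux)
  have lower: "Lo i \<omega> \<le> ln (A i \<omega>)" if "\<omega> \<in> space (PiM I N)" "i<n" for \<omega> i
  proof -
    have "Lo i \<omega> = ln ((1 / real k) * lik i (\<omega> (i,0)))"
      unfolding Lo_def using lik0[OF that] kpos by (simp add: ln_mult ln_div)
    also have "\<dots> \<le> ln (A i \<omega>)"
    proof -
      have h1: "0 < (1 / real k) * lik i (\<omega> (i,0))" using lik0[OF that] kpos by simp
      show ?thesis using ln_le_cancel_iff[OF h1 A_pos[OF that]] A_low[OF that] by simp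
    qed
    finally show ?thesis .
  qed
  have lnA_int: "integrable (PiM I N) (\<lambda>\<omega>. ln (A i \<omega>))" if "i<n" for i
  proof (rule Bochner_Integration.integrable_bound)
    show "integrable (PiM I N) (\<lambda>\<omega>. \<bar>U i \<omega>\<bar> + \<bar>Lo i \<omega>\<bar>)"
      using U_int[OF that] Lo_int[OF that] by simp
    show "(\<lambda>\<omega>. ln (A i \<omega>)) \<in> borel_measurable (PiM I N)" by (rule lnA_meas[OF that])
    show "AE \<omega> in PiM I N. norm (ln (A i \<omega>)) \<le> norm (\<bar>U i \<omega>\<bar> + \<bar>Lo i \<omega>\<bar>)"
    proof (rule AE_I2)
      fix \<omega> assume "\<omega> \<in> space (PiM I N)"
      from upper[OF this that] lower[OF this that]
      show "norm (ln (A i \<omega>)) \<le> norm (\<bar>U i \<omega>\<bar> + \<bar>Lo i \<omega>\<bar>)" by simp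
    qed
  qed
  have lnA_E: "(\<integral>\<omega>. ln (A i \<omega>) \<partial>PiM I N) \<le> ln (c i)" if "i<n" for i
  proof -
    have "(\<integral>\<omega>. ln (A i \<omega>) \<partial>PiM I N) \<le> integral\<^sup>L (PiM I N) (U i)"
      using lnA_int[OF that] U_int[OF that] upper that by (intro integral_mono) auto
    also have "\<dots> = ln (c i)"
      unfolding U_def using A_int[OF that] A_E[OF that] c_pos[OF that] S.prob_space
      by (simp add: lebesgue_integral_const)
    finally show ?thesis .
  qed
  have part4: "L_k M lik n k \<le> ln (marg M lik n)"
  proof -
    have "L_k M lik n k = (\<Sum>i<n. \<integral>\<omega>. ln (A i \<omega>) \<partial>PiM I N)"
      unfolding L_k_def S_eq Lhat_k_def A_def[symmetric] using lnA_int
      by (intro Bochner_Integration.integral_sum) auto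
    also have "\<dots> \<le> (\<Sum>i<n. ln (c i))" using lnA_E by (intro sum_mono) auto
    finally show ?thesis using tele by (simp add: m_def)
  qed
  have sfM: "sigma_finite_measure M" by unfold_locales
  have KL_eq: "KL (post M lik i) (post M lik (Suc i))
      = ln (c i) - integral\<^sup>L (post M lik i) (\<lambda>\<theta>. ln (lik i \<theta>))" if "i<n" for i
  proof -
    have Si: "Suc i \<le> n" "i \<le> n" using that by auto
    have "KL (post M lik i) (post M lik (Suc i)) = (\<integral>\<theta>. g i \<theta> * log (exp 1) (g i \<theta> / g (Suc i) \<theta>) \<partial>M)"
      unfolding KL_def post_eq
    proof (rule sigma_finite_measure.KL_density_density[OF sfM])
      show "AE x in M. g (Suc i) x = 0 \<longrightarrow> g i x = 0"
      proof (rule AE_I2, rule impI)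
        fix x assume x: "x \<in> space M" "g (Suc i) x = 0"
        then show "g i x = 0" using p_pos[OF Si(1) x(1)] m_pos[OF Si(1)] by (simp add: g_def)
      qed
    qed (use Si g_meas g_nn in auto)
    also have "\<dots> = (\<integral>\<theta>. ln (c i) * g i \<theta> - g i \<theta> * ln (lik i \<theta>) \<partial>M)"
    proof (intro Bochner_Integration.integral_cong refl)
      fix \<theta> assume th: "\<theta> \<in> space M"
      have pos: "p i \<theta> > 0" "lik i \<theta> > 0" "m i > 0" "m (Suc i) > 0"
        using p_pos[OF Si(2) th] assms(4)[OF that th] m_pos Si by auto
      have "g i \<theta> / g (Suc i) \<theta> = c i / lik i \<theta>"
        using pos unfolding g_def c_def p_Suc by (simp add: field_simps)
      then have "log (exp 1) (g i \<theta> / g (Suc i) \<theta>) = ln (c i) - ln (lik i \<theta>)"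
        using pos c_pos[OF that] by (simp add: log_ln[symmetric] ln_div)
      then show "g i \<theta> * log (exp 1) (g i \<theta> / g (Suc i) \<theta>) = ln (c i) * g i \<theta> - g i \<theta> * ln (lik i \<theta>)"
        by (simp only:) (simp add: algebra_simps)
    qed
    also have "\<dots> = ln (c i) * integral\<^sup>L M (g i) - (\<integral>\<theta>. g i \<theta> * ln (lik i \<theta>) \<partial>M)"
      using g_int[OF Si(2)] int_post[OF Si(2) ln_meas[OF that]] assms(6)[OF that] by simp
    also have "\<dots> = ln (c i) - integral\<^sup>L (post M lik i) (\<lambda>\<theta>. ln (lik i \<theta>))"
      using g_one[OF Si(2)] integral_post[OF Si(2) ln_meas[OF that]] by simp
    finally show ?thesis .
  qed
  have part5: "L M lik n = ln (marg M lik n) - (\<Sum>i<n. KL (post M lik i) (post M lik (Suc i)))"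
  proof -
    have "(\<Sum>i<n. KL (post M lik i) (post M lik (Suc i)))
       = (\<Sum>i<n. ln (c i)) - L M lik n"
      unfolding L_def using KL_eq by (simp add: sum_subtractf)
    then show ?thesis using tele by (simp add: m_def)
  qed
  show ?thesis using part1 part2 part3 part4 part5 by simp
qed
end
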